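(* Let $(f_k)_{k\ge1}$ be the Fibonacci numbers ($f_1=f_2=1$, $f_{k+1}=f_k+f_{k-1}$) and $(g_k)_{k\ge1}$ the Lucas numbers ($g_1=1$, $g_2=3$, $g_{k+1}=g_k+g_{k-1}$). Then $$\sum_{k=1}^{\infty}\left[\mathcal L\left(\frac{1}{5f_{2k}^2}\right)+\mathcal L\left(\frac{1}{g_{2k+1}^2}\right)\right]=\frac{\pi^2}{15}.$$
   Context: $\mathcal L$ is the Rogers dilogarithm: for real $z\le1$, $\mathcal L(z)=\mathrm{Li}_2(z)+\tfrac12\log|z|\log(1-z)$, where $\mathrm{Li}_2(z)=\sum_{m\ge1}z^m/m^2$. *)

theory Defs
  imports "HOL-Analysis.Analysis"
begin

fun fibo :: "nat \<Rightarrow> nat" where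
  "fibo 0 = 0"
| "fibo (Suc 0) = 1"
| "fibo (Suc (Suc n)) = fibo (Suc n) + fibo n"

fun lucas :: "nat \<Rightarrow> nat" where
  "lucas 0 = 2"
| "lucas (Suc 0) = 1"
| "lucas (Suc (Suc n)) = lucas (Suc n) + lucas n"

definition Li2 :: "real \<Rightarrow> real" where
  "Li2 z = (\<Sum>m. z ^ (m + 1) / (real (m + 1))\<^sup>2)"

definition rogersL :: "real \<Rightarrow> real" where
  "rogersL z = Li2 z + (1/2) * ln \<bar>z\<bar> * ln (1 - z)"

end

theory Submission
  imports Defs "HOL-Real_Asymp.Real_Asymp"
begin


lemma summable_inv_sq: "summable (\<lambda>m. 1 / (real (m + 1))\<^sup>2)"
  using inverse_squares_sums sums_summable by (simp add: add.commute)

lemma Li2_cont: "continuous_on {-1..1} Li2"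
proof -
  have "continuous_on {-1..1} (\<lambda>z. \<Sum>m. z ^ (m + 1) / (real (m + 1))\<^sup>2)"
  proof (rule uniform_limit_theorem; (intro always_eventually allI)?)
    show "uniform_limit {-1..1} (\<lambda>n z. \<Sum>m<n. z ^ (m + 1) / (real (m + 1))\<^sup>2) (\<lambda>z. \<Sum>m. z ^ (m + 1) / (real (m + 1))\<^sup>2) sequentially"
    proof (rule Weierstrass_m_test[OF _ summable_inv_sq])
      fix n :: nat and z :: real assume z: "z \<in> {-1..1}"
      have "\<bar>z\<bar> ^ (n+1) \<le> 1" using z by (intro power_le_one) auto
      thus "norm (z ^ (n + 1) / (real (n + 1))\<^sup>2) \<le> 1 / (real (n + 1))\<^sup>2"
        by (simp add: abs_mult power_abs divide_right_mono del: of_nat_Suc)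
    qed
  qed (auto intro!: continuous_intros)
  thus ?thesis unfolding Li2_def[abs_def] .
qed

lemma Li2_one: "Li2 1 = pi\<^sup>2 / 6"
  unfolding Li2_def using inverse_squares_sums by (simp add: sums_iff add.commute)

lemma Li2_zero: "Li2 0 = 0"
  unfolding Li2_def by simp

lemma Li2_deriv:
  assumes "0 < z" "z < 1"
  shows "(Li2 has_real_derivative (- ln (1 - z) / z)) (at z)"
proof -
  define c where "c = (\<lambda>n::nat. 1 / (real n)\<^sup>2)"
  have eq: "Li2 = (\<lambda>z. \<Sum>n. c n * z ^ n)"
  proof
    fix z
    have shf: "(\<lambda>n. c (Suc n) * z ^ Suc n) sums s \<longleftrightarrow> (\<lambda>n. c n * z ^ n) sums s" for s
      using sums_Suc_iff[of "\<lambda>n. c n * z ^ n" s] by (simp add: c_def)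
    hence "(\<Sum>n. c (Suc n) * z ^ Suc n) = (\<Sum>n. c n * z ^ n)"
      unfolding suminf_def by (intro arg_cong[where f=The] ext) (rule shf)
    thus "Li2 z = (\<Sum>n. c n * z ^ n)"
      unfolding Li2_def c_def by (simp add: field_simps)
  qed
  have sm: "summable (\<lambda>n. c n * w ^ n)" if "norm w < 1" for w :: real
  proof (rule summable_comparison_test[OF _ summable_geometric[of "\<bar>w\<bar>"]])
    show "\<exists>N. \<forall>n\<ge>N. norm (c n * w ^ n) \<le> \<bar>w\<bar> ^ n"
    proof (intro exI allI impI)
      fix n :: nat assume "n \<ge> 1"
      hence "c n \<le> 1" "c n \<ge> 0" by (auto simp: c_def)
      thus "norm (c n * w ^ n) \<le> \<bar>w\<bar> ^ n"
        by (simp add: abs_mult power_abs mult_left_le_one_le)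
    qed
  qed (use that in auto)
  have d: "(Li2 has_real_derivative (\<Sum>n. diffs c n * z ^ n)) (at z)"
    unfolding eq by (rule termdiffs_strong'[of 1]) (use sm assms in auto)
  have "(\<lambda>n. - ((- (-z)) ^ n) / of_nat n) sums ln (1 + (-z))"
    by (rule ln_series') (use assms in auto)
  hence "(\<lambda>n. - (z ^ n) / of_nat n) sums ln (1 - z)" by simp
  hence "(\<lambda>n. - (z ^ Suc n) / of_nat (Suc n)) sums ln (1 - z)"
    using sums_Suc_iff[of "\<lambda>n. - (z ^ n) / of_nat n"] by simp
  from sums_divide[OF this, of "-z"]
  have "(\<lambda>n. diffs c n * z ^ n) sums (- ln (1 - z) / z)"
    using assms by (simp add: diffs_def c_def field_simps power2_eq_square del: of_nat_Suc)
  with d show ?thesis by (simp add: sums_iff)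
qed



lemma logprod_cont: "continuous_on {0..1} (\<lambda>z::real. ln \<bar>z\<bar> * ln (1 - z))"
proof (rule continuous_on_IccI)
  show "((\<lambda>z::real. ln \<bar>z\<bar> * ln (1 - z)) \<longlongrightarrow> ln \<bar>0\<bar> * ln (1 - 0)) (at_right 0)"
    by simp real_asymp
  show "((\<lambda>z::real. ln \<bar>z\<bar> * ln (1 - z)) \<longlongrightarrow> ln \<bar>1\<bar> * ln (1 - 1)) (at_left 1)"
    by simp real_asymp
  fix x :: real assume "0 < x" "x < 1"
  thus "(\<lambda>z. ln \<bar>z\<bar> * ln (1 - z)) \<midarrow>x\<rightarrow> ln \<bar>x\<bar> * ln (1 - x)"
    by (intro tendsto_intros) auto
qed simp

lemma L_cont: "continuous_on {0..1} rogersL"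
proof -
  have "continuous_on {0..1} Li2" by (rule continuous_on_subset[OF Li2_cont]) auto
  hence "continuous_on {0..1} (\<lambda>z. Li2 z + (1/2) * (ln \<bar>z\<bar> * ln (1 - z)))"
    by (intro continuous_intros logprod_cont)
  thus ?thesis unfolding rogersL_def[abs_def] by (simp add: mult.assoc)
qed

lemma L_deriv:
  assumes "0 < z" "z < 1"
  shows "(rogersL has_real_derivative (-(ln (1 - z) / z + ln z / (1 - z)) / 2)) (at z)"
proof -
  have nz: "1 - z \<noteq> 0" "z \<noteq> 0" "2 - 2 * z \<noteq> 0" using assms by auto
  have "((\<lambda>z. Li2 z + 1/2 * ln z * ln (1 - z)) has_real_derivative
          (-(ln (1 - z) / z + ln z / (1 - z)) / 2)) (at z)"
    using assms nz by (auto intro!: derivative_eq_intros Li2_deriv simp: field_simps)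
  thus ?thesis
    by (rule has_field_derivative_transform_within_open[where S="{0<..<1}"])
       (use assms in \<open>auto simp: rogersL_def\<close>)
qed

lemma L_zero: "rogersL 0 = 0" by (simp add: rogersL_def Li2_zero)
lemma L_one: "rogersL 1 = pi\<^sup>2 / 6" by (simp add: rogersL_def Li2_one)



lemma sym_deriv:
  assumes d: "(g has_real_derivative g x * P') (at x)"
    and e: "g x * P' = - ((1 - g x) * Q')"
    and r: "0 < g x" "g x < 1"
    and lp: "ln (g x) = P" and lq: "ln (1 - g x) = Q"
  shows "((\<lambda>x. rogersL (g x)) has_real_derivative (P * Q' - Q * P') / 2) (at x)"
proof -
  have "((\<lambda>x. rogersL (g x)) has_real_derivative
     (-(ln (1 - g x) / g x + ln (g x) / (1 - g x)) / 2) * (g x * P')) (at x)"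
    by (rule DERIV_chain2[OF L_deriv[OF r] d])
  moreover have "(-(ln (1 - g x) / g x + ln (g x) / (1 - g x)) / 2) * (g x * P')
        = (P * Q' - Q * P') / 2"
  proof -
    have "1 - g x \<noteq> 0" "g x \<noteq> 0" using r by auto
    have "(-(ln (1 - g x) / g x + ln (g x) / (1 - g x)) / 2) * (g x * P')
       = (- Q * P' - P * (g x * P') / (1 - g x)) / 2"
      using r lp lq by (simp add: field_simps)
    also have "P * (g x * P') / (1 - g x) = P * (- ((1 - g x) * Q')) / (1 - g x)"
      by (simp add: e)
    also have "\<dots> = - P * Q'" using r by simp
    finally show ?thesis by simp
  qed
  ultimately show ?thesis by simp
qed

lemma const_on:
  fixes F :: "real \<Rightarrow> real"
  assumes "a \<le> b" "continuous_on {a..b} F"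
    "\<And>x. a < x \<Longrightarrow> x < b \<Longrightarrow> (F has_real_derivative 0) (at x)"
  shows "F b = F a"
proof (cases "a = b")
  case False
  with assms show ?thesis by (intro DERIV_isconst_end) auto
qed simp

lemma L_cont_comp:
  assumes "continuous_on S g" "g ` S \<subseteq> {0..1}"
  shows "continuous_on S (\<lambda>x. rogersL (g x))"
  by (rule continuous_on_compose2[OF L_cont assms(1,2)])

lemma L_reflect:
  assumes "0 \<le> x" "x \<le> 1"
  shows "rogersL x + rogersL (1 - x) = pi\<^sup>2 / 6"
proof -
  have "(\<lambda>x. rogersL x + rogersL (1 - x)) x = (\<lambda>x. rogersL x + rogersL (1 - x)) 0"
  proof (rule const_on[where F="\<lambda>x. rogersL x + rogersL (1 - x)"])
    show "continuous_on {0..x} (\<lambda>x. rogersL x + rogersL (1 - x))"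
      using assms by (intro continuous_intros L_cont_comp) auto
    fix y :: real assume y: "0 < y" "y < x"
    have "((\<lambda>x. rogersL x + rogersL (1 - x)) has_real_derivative
      (ln y * (-1/(1-y)) - ln (1 - y) * (1/y)) / 2 + (ln (1 - y) * (1/y) - ln y * (-1/(1-y))) / 2) (at y)"
    proof (rule DERIV_add)
      show "(rogersL has_real_derivative (ln y * (-1/(1-y)) - ln (1 - y) * (1/y)) / 2) (at y)"
        using sym_deriv[of "\<lambda>x. x" y "1/y" "-1/(1-y)" "ln y" "ln (1 - y)"] y assms
        by (auto intro!: derivative_eq_intros simp: field_simps)
      show "((\<lambda>x. rogersL (1 - x)) has_real_derivative (ln (1 - y) * (1/y) - ln y * (-1/(1-y))) / 2) (at y)"
        by (rule sym_deriv[where g="\<lambda>x. 1 - x" and P'="-1/(1-y)" and Q'="1/y"])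
           (use y assms in \<open>auto intro!: derivative_eq_intros simp: field_simps\<close>)
    qed
    thus "((\<lambda>x. rogersL x + rogersL (1 - x)) has_real_derivative 0) (at y)"
      by (rule DERIV_cong) (simp add: field_simps)
  qed (use assms in auto)
  thus ?thesis by (simp add: L_zero L_one)
qed



lemma L_dup:
  assumes "0 \<le> x" "x < 1"
  shows "2 * rogersL x - rogersL (x\<^sup>2) - 2 * rogersL (x / (1 + x)) = 0"
proof -
  let ?F = "\<lambda>x. 2 * rogersL x - rogersL (x\<^sup>2) - 2 * rogersL (x / (1 + x))"
  have "?F x = ?F 0"
  proof (rule const_on[where F="?F"])
    show "continuous_on {0..x} ?F"
      using assms by (intro continuous_intros L_cont_comp) (auto simp: field_simps power_le_one)
    fix t :: real assume t: "0 < t" "t < x"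
    define ex where "ex = 1 / t"
    define em where "em = -1 / (1 - t)"
    define ep where "ep = 1 / (1 + t)"
    define lx where "lx = ln t"
    define lm where "lm = ln (1 - t)"
    define lp where "lp = ln (1 + t)"
    have t1: "t < 1" using t assms by simp
    have d1: "(rogersL has_real_derivative (lx * em - lm * ex) / 2) (at t)"
      by (rule sym_deriv[where g="\<lambda>x. x" and P'="ex" and Q'="em"])
         (use t t1 in \<open>auto intro!: derivative_eq_intros simp: field_simps ex_def em_def lx_def lm_def\<close>)
    have d2: "((\<lambda>x. rogersL (x\<^sup>2)) has_real_derivative ((2*lx) * (em + ep) - (lm + lp) * (2 * ex)) / 2) (at t)"
    proof (rule sym_deriv[where g="\<lambda>x. x\<^sup>2" and P'="2 * ex" and Q'="em + ep"])
      show "((\<lambda>x. x\<^sup>2) has_real_derivative t\<^sup>2 * (2 * ex)) (at t)"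
        using t by (auto intro!: derivative_eq_intros simp: ex_def power2_eq_square)
      have "t * t < 1 * 1" using t t1 by (intro mult_strict_mono) auto
      hence "1 - t * t \<noteq> 0" "1 - t \<noteq> 0" "1 + t \<noteq> 0" using t t1 by auto
      thus "t\<^sup>2 * (2 * ex) = - ((1 - t\<^sup>2) * (em + ep))"
        using t t1 by (simp add: ex_def em_def ep_def field_simps power2_eq_square)
      show "0 < t\<^sup>2" "t\<^sup>2 < 1" using t t1 by (auto simp: power_less_one_iff)
      show "ln (t\<^sup>2) = 2 * lx" using t by (simp add: lx_def ln_realpow)
      have "1 - t\<^sup>2 = (1 - t) * (1 + t)" by (simp add: algebra_simps power2_eq_square)
      thus "ln (1 - t\<^sup>2) = lm + lp" using t t1 by (simp add: lm_def lp_def ln_mult)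
    qed
    have d3: "((\<lambda>x. rogersL (x / (1 + x))) has_real_derivative ((lx - lp) * (- ep) - (- lp) * (ex - ep)) / 2) (at t)"
    proof (rule sym_deriv[where g="\<lambda>x. x / (1 + x)" and P'="ex - ep" and Q'="- ep"])
      have nz: "t \<noteq> 0" "1 + t \<noteq> 0" using t by auto
      have "ex - ep = 1 / (t * (1 + t))" using nz by (simp add: ex_def ep_def field_simps)
      hence "t / (1 + t) * (ex - ep) = 1 / ((1 + t) * (1 + t))" using nz by simp
      hence "t / (1 + t) * (ex - ep) = (1 * (1 + t) - t * (0 + 1)) / ((1 + t) * (1 + t))"
        by simp
      moreover have "((\<lambda>x. x / (1 + x)) has_real_derivative (1 * (1 + t) - t * (0 + 1)) / ((1 + t) * (1 + t))) (at t)"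
        using t by (intro derivative_intros DERIV_divide) auto
      ultimately show "((\<lambda>x. x / (1 + x)) has_real_derivative t / (1 + t) * (ex - ep)) (at t)"
        by simp
      have "1 - t / (1 + t) = 1 / (1 + t)" using nz by (simp add: field_simps)
      thus "t / (1 + t) * (ex - ep) = - ((1 - t / (1 + t)) * - ep)"
        using \<open>t / (1 + t) * (ex - ep) = 1 / ((1 + t) * (1 + t))\<close> by (simp add: ep_def)
      show "0 < t / (1 + t)" "t / (1 + t) < 1" using t by auto
      show "ln (t / (1 + t)) = lx - lp" using t by (simp add: lx_def lp_def ln_div)
      have "1 - t / (1 + t) = 1 / (1 + t)" using t by (simp add: field_simps)
      thus "ln (1 - t / (1 + t)) = - lp" using t by (simp add: lp_def ln_div)
    qed
    have "(?F has_real_derivative 2 * ((lx * em - lm * ex) / 2) - ((2*lx) * (em + ep) - (lm + lp) * (2 * ex)) / 2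
             - 2 * (((lx - lp) * (- ep) - (- lp) * (ex - ep)) / 2)) (at t)"
      by (intro DERIV_diff DERIV_cmult d1 d2 d3)
    thus "(?F has_real_derivative 0) (at t)"
      by (rule DERIV_cong) (simp add: field_simps)
  qed (use assms in auto)
  thus ?thesis by (simp add: L_zero)
qed

definition gold :: real where "gold = (1 + sqrt 5) / 2"

lemma gold_sq: "gold\<^sup>2 = gold + 1"
  by (simp add: gold_def power2_eq_square field_simps)

lemma gold_gt1: "gold > 1"
proof -
  have "sqrt 5 > 1" by (simp add: real_less_rsqrt)
  thus ?thesis by (simp add: gold_def)
qed

lemma L_gold: "rogersL (1 / (gold + 1)) = pi\<^sup>2 / 15"
proof -
  have g1: "gold > 1" by (rule gold_gt1)
  have gs: "gold * gold = gold + 1" using gold_sq by (simp add: power2_eq_square)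
  have a: "(1 / gold)\<^sup>2 = 1 / (gold + 1)" using gs by (simp add: power2_eq_square field_simps)
  have b: "(1 / gold) / (1 + 1 / gold) = 1 / (gold + 1)" using g1 by (simp add: field_simps)
  have c: "1 - 1 / gold = 1 / (gold + 1)" using g1 gs by (simp add: field_simps)
  have "2 * rogersL (1/gold) - rogersL ((1/gold)\<^sup>2) - 2 * rogersL ((1/gold) / (1 + 1/gold)) = 0"
    using g1 by (intro L_dup) auto
  hence 1: "2 * rogersL (1/gold) = 3 * rogersL (1 / (gold + 1))" unfolding a b by simp
  have "rogersL (1/gold) + rogersL (1 - 1/gold) = pi\<^sup>2 / 6"
    using g1 by (intro L_reflect) auto
  hence "rogersL (1/gold) + rogersL (1 / (gold + 1)) = pi\<^sup>2 / 6" unfolding c .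
  with 1 show ?thesis by simp
qed



lemma main_deriv:
  fixes p t :: real
  assumes hp: "p * p = p + 1" and p: "p > 1" and t: "t > p + 1"
  shows "((\<lambda>x. rogersL (x / (x - 1)\<^sup>2) - rogersL ((x - 1) / ((p+1) * x - 1))
           - rogersL ((p+1) * (x - 1) / ((p+1) * x - 1))
           + rogersL ((x - (p+1)) / ((p+1) * (x - 1))) + rogersL ((x - (p+1)) / (x - 1)))
          has_real_derivative 0) (at t)"
proof -
  define q where "q = p + 1"
  have hq: "q = p * p" using hp by (simp add: q_def)
  have q1: "q > 1" "t > q" using p t by (auto simp: q_def)
  define A where "A = t - 1"
  define B where "B = q * t - 1"
  define C where "C = t - q"
  have qt: "q * t > 1 * 1" using q1 by (intro mult_strict_mono) auto
  have pos: "A > 0" "B > 0" "C > 0" "t > 0" "q > 0" "p > 0"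
    using q1 qt p by (auto simp: A_def B_def C_def)
  have BA: "B - A = p * t" by (simp add: B_def A_def q_def algebra_simps)
  have BqA: "B - q * A = p" by (simp add: B_def A_def q_def algebra_simps)
  have AC: "A - C = p" by (simp add: C_def A_def q_def algebra_simps)
  have qAC: "q * A - C = p * t" by (simp add: C_def A_def q_def algebra_simps)
  have pB: "p = B - q * A" using BqA by simp
  have pA: "p = A - C" using AC by simp
  have AA: "A * A - t = C * B / q"
    using pos hp by (simp add: A_def B_def C_def q_def field_simps) algebra
  define et where "et = 1 / t"
  define eA where "eA = 1 / A"
  define eB where "eB = q / B"
  define eC where "eC = 1 / C"
  define lt where "lt = ln t"
  define lA where "lA = ln A"
  define lB where "lB = ln B"
  define lC where "lC = ln C"
  define lp where "lp = ln p"
  have lq: "ln q = 2 * lp" using pos by (simp add: hq lp_def ln_mult)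
  have dA: "((\<lambda>x. x - 1) has_real_derivative 1) (at t)" by (auto intro!: derivative_eq_intros)
  have dB: "((\<lambda>x. q * x - 1) has_real_derivative q) (at t)" by (auto intro!: derivative_eq_intros)
  have dC: "((\<lambda>x. x - q) has_real_derivative 1) (at t)" by (auto intro!: derivative_eq_intros)
  have z: "((\<lambda>x. rogersL (x / (x - 1)\<^sup>2)) has_real_derivative
     ((lt - 2*lA) * (eC + eB - 2*eA) - (lC + lB - 2*lp - 2*lA) * (et - 2*eA)) / 2) (at t)"
  proof (rule sym_deriv[where g="\<lambda>x. x / (x - 1)\<^sup>2" and P'="et - 2*eA" and Q'="eC + eB - 2*eA"])
    show "((\<lambda>x. x / (x - 1)\<^sup>2) has_real_derivative t / (t - 1)\<^sup>2 * (et - 2*eA)) (at t)"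
      apply (rule DERIV_cong[OF DERIV_divide[OF DERIV_ident DERIV_power[OF DERIV_diff[OF DERIV_ident DERIV_const]]]])
      using pos by (simp_all add: A_def[symmetric] et_def eA_def field_simps power2_eq_square)
    have 1: "1 - t / (t - 1)\<^sup>2 = C * B / (q * A\<^sup>2)"
    proof -
      have "1 - t / A\<^sup>2 = (A * A - t) / (A * A)" using pos by (simp add: field_simps power2_eq_square)
      also have "\<dots> = C * B / (q * A\<^sup>2)" unfolding AA by (simp add: power2_eq_square)
      finally show ?thesis by (simp add: A_def)
    qed
    have key: "q * (A - 2 * t) + B * A + q * C * A - 2 * C * B = 0"
      using hp unfolding A_def B_def C_def q_def by algebra
    have L1: "t / (t - 1)\<^sup>2 * (et - 2*eA) = (A - 2 * t) / A ^ 3"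
      using pos unfolding A_def[symmetric] by (simp add: et_def eA_def field_simps power2_eq_square power3_eq_cube)
    have R1: "(C * B / (q * A\<^sup>2)) * (eC + eB - 2*eA) = (B * A + q * C * A - 2 * C * B) / (q * A ^ 3)"
      using pos by (simp add: eC_def eB_def eA_def field_simps power2_eq_square power3_eq_cube)
    have "(A - 2 * t) / A ^ 3 = - ((B * A + q * C * A - 2 * C * B) / (q * A ^ 3))"
    proof -
      have "B * A + q * C * A - 2 * C * B = - (q * (A - 2 * t))" using key by simp
      thus ?thesis using pos by simp
    qed
    thus "t / (t - 1)\<^sup>2 * (et - 2*eA) = - ((1 - t / (t - 1)\<^sup>2) * (eC + eB - 2*eA))"
      unfolding 1 L1 R1 .
    have "C * B / q > 0" using pos by simp
    hence "t < A * A" using AA by linarith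
    thus "0 < t / (t - 1)\<^sup>2" "t / (t - 1)\<^sup>2 < 1" using pos unfolding A_def[symmetric]
      by (auto simp: power2_eq_square field_simps)
    show "ln (t / (t - 1)\<^sup>2) = lt - 2*lA" using pos unfolding A_def[symmetric]
      by (simp add: ln_div ln_realpow lt_def lA_def)
    show "ln (1 - t / (t - 1)\<^sup>2) = lC + lB - 2*lp - 2*lA" unfolding 1 using pos lq
      by (simp add: ln_div ln_mult ln_realpow lC_def lB_def lA_def)
  qed
  have u1: "((\<lambda>x. rogersL ((x - 1) / (q * x - 1))) has_real_derivative
     ((lA - lB) * (et - eB) - (lp + lt - lB) * (eA - eB)) / 2) (at t)"
  proof (rule sym_deriv[where g="\<lambda>x. (x - 1) / (q * x - 1)" and P'="eA - eB" and Q'="et - eB"])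
    have "A / B * (eA - eB) = (B - q * A) / B\<^sup>2"
      using pos by (simp add: eA_def eB_def field_simps power2_eq_square)
    hence e1: "A / B * (eA - eB) = p / B\<^sup>2" unfolding BqA .
    show "((\<lambda>x. (x - 1) / (q * x - 1)) has_real_derivative (t - 1) / (q * t - 1) * (eA - eB)) (at t)"
      apply (rule DERIV_cong[OF DERIV_divide[OF DERIV_diff[OF DERIV_ident DERIV_const] DERIV_diff[OF DERIV_cmult[OF DERIV_ident] DERIV_const]]])
      unfolding A_def[symmetric] B_def[symmetric] e1 pB using pos
      by (simp_all add: field_simps power2_eq_square)
    have 1: "1 - A / B = p * t / B" using pos BA[symmetric] by (simp add: field_simps)
    have "(p * t / B) * (et - eB) = p * (B - q * t) / B\<^sup>2"
      using pos by (simp add: et_def eB_def field_simps power2_eq_square)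
    also have "B - q * t = -1" by (simp add: B_def)
    finally show "(t - 1) / (q * t - 1) * (eA - eB) = - ((1 - (t - 1) / (q * t - 1)) * (et - eB))"
      unfolding A_def[symmetric] B_def[symmetric] 1 e1 by simp
    show "0 < (t - 1) / (q * t - 1)" "(t - 1) / (q * t - 1) < 1"
      unfolding A_def[symmetric] B_def[symmetric] using pos BA by (auto simp: field_simps)
    show "ln ((t - 1) / (q * t - 1)) = lA - lB"
      unfolding A_def[symmetric] B_def[symmetric] using pos by (simp add: ln_div lA_def lB_def)
    show "ln (1 - (t - 1) / (q * t - 1)) = lp + lt - lB"
      unfolding A_def[symmetric] B_def[symmetric] 1 using pos by (simp add: ln_div ln_mult lp_def lt_def lB_def)
  qed
  have v1: "((\<lambda>x. rogersL (q * (x - 1) / (q * x - 1))) has_real_derivative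
     ((2 * lp + lA - lB) * (- eB) - (lp - lB) * (eA - eB)) / 2) (at t)"
  proof (rule sym_deriv[where g="\<lambda>x. q * (x - 1) / (q * x - 1)" and P'="eA - eB" and Q'="- eB"])
    have "q * A / B * (eA - eB) = q * (B - q * A) / B\<^sup>2"
      using pos by (simp add: eA_def eB_def field_simps power2_eq_square)
    hence e1: "q * A / B * (eA - eB) = q * p / B\<^sup>2" unfolding BqA .
    show "((\<lambda>x. q * (x - 1) / (q * x - 1)) has_real_derivative q * (t - 1) / (q * t - 1) * (eA - eB)) (at t)"
      apply (rule DERIV_cong[OF DERIV_divide[OF DERIV_cmult[OF DERIV_diff[OF DERIV_ident DERIV_const]] DERIV_diff[OF DERIV_cmult[OF DERIV_ident] DERIV_const]]])
      unfolding A_def[symmetric] B_def[symmetric] e1 pB using pos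
      by (simp_all add: field_simps power2_eq_square)
    have 1: "1 - q * A / B = p / B" using pos BqA[symmetric] by (simp add: field_simps)
    show "q * (t - 1) / (q * t - 1) * (eA - eB) = - ((1 - q * (t - 1) / (q * t - 1)) * - eB)"
      unfolding A_def[symmetric] B_def[symmetric] 1 e1 using pos
      by (simp add: eB_def field_simps power2_eq_square)
    show "0 < q * (t - 1) / (q * t - 1)" "q * (t - 1) / (q * t - 1) < 1"
      unfolding A_def[symmetric] B_def[symmetric] using pos BqA by (auto simp: field_simps)
    show "ln (q * (t - 1) / (q * t - 1)) = 2 * lp + lA - lB"
      unfolding A_def[symmetric] B_def[symmetric] using pos lq by (simp add: ln_div ln_mult lA_def lB_def)
    show "ln (1 - q * (t - 1) / (q * t - 1)) = lp - lB"
      unfolding A_def[symmetric] B_def[symmetric] 1 using pos by (simp add: ln_div lp_def lB_def)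
  qed
  have u0: "((\<lambda>x. rogersL ((x - q) / (q * (x - 1)))) has_real_derivative
     ((lC - 2 * lp - lA) * (et - eA) - (lt - lp - lA) * (eC - eA)) / 2) (at t)"
  proof (rule sym_deriv[where g="\<lambda>x. (x - q) / (q * (x - 1))" and P'="eC - eA" and Q'="et - eA"])
    have "C / (q * A) * (eC - eA) = (A - C) / (q * A\<^sup>2)"
      using pos by (simp add: eA_def eC_def field_simps power2_eq_square)
    also have "\<dots> = 1 / (p * A\<^sup>2)" unfolding AC hq using pos by simp
    finally have e1: "C / (q * A) * (eC - eA) = 1 / (p * A\<^sup>2)" .
    show "((\<lambda>x. (x - q) / (q * (x - 1))) has_real_derivative (t - q) / (q * (t - 1)) * (eC - eA)) (at t)"
      apply (rule DERIV_cong[OF DERIV_divide[OF DERIV_diff[OF DERIV_ident DERIV_const] DERIV_cmult[OF DERIV_diff[OF DERIV_ident DERIV_const]]]])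
      unfolding A_def[symmetric] C_def[symmetric] using pos
      by (simp_all add: field_simps power2_eq_square eA_def eC_def)
    have "1 - C / (q * A) = (q * A - C) / (q * A)" using pos by (simp add: field_simps)
    also have "\<dots> = p * t / (p * p * A)" unfolding qAC by (simp add: hq)
    also have "\<dots> = t / (p * A)" using pos by simp
    finally have 1: "1 - C / (q * A) = t / (p * A)" .
    have "(t / (p * A)) * (et - eA) = (A - t) / (p * A\<^sup>2)"
      using pos by (simp add: et_def eA_def field_simps power2_eq_square)
    also have "A - t = -1" by (simp add: A_def)
    finally show "(t - q) / (q * (t - 1)) * (eC - eA) = - ((1 - (t - q) / (q * (t - 1))) * (et - eA))"
      unfolding A_def[symmetric] C_def[symmetric] 1 e1 by simp
    show "0 < (t - q) / (q * (t - 1))" "(t - q) / (q * (t - 1)) < 1"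
    proof -
      have "C < q * A" using qAC mult_pos_pos[of p t] pos by linarith
      moreover have "q * A > 0" using pos by simp
      ultimately show "0 < (t - q) / (q * (t - 1))" "(t - q) / (q * (t - 1)) < 1"
        unfolding A_def[symmetric] C_def[symmetric] using pos by (auto simp: divide_less_eq)
    qed
    show "ln ((t - q) / (q * (t - 1))) = lC - 2 * lp - lA"
      unfolding A_def[symmetric] C_def[symmetric] using pos lq by (simp add: ln_div ln_mult lA_def lC_def)
    show "ln (1 - (t - q) / (q * (t - 1))) = lt - lp - lA"
      unfolding A_def[symmetric] C_def[symmetric] 1 using pos by (simp add: ln_div ln_mult lp_def lt_def lA_def)
  qed
  have v0: "((\<lambda>x. rogersL ((x - q) / (x - 1))) has_real_derivative
     ((lC - lA) * (- eA) - (lp - lA) * (eC - eA)) / 2) (at t)"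
  proof (rule sym_deriv[where g="\<lambda>x. (x - q) / (x - 1)" and P'="eC - eA" and Q'="- eA"])
    have "C / A * (eC - eA) = (A - C) / A\<^sup>2"
      using pos by (simp add: eA_def eC_def field_simps power2_eq_square)
    hence e1: "C / A * (eC - eA) = p / A\<^sup>2" unfolding AC .
    show "((\<lambda>x. (x - q) / (x - 1)) has_real_derivative (t - q) / (t - 1) * (eC - eA)) (at t)"
      apply (rule DERIV_cong[OF DERIV_divide[OF DERIV_diff[OF DERIV_ident DERIV_const] DERIV_diff[OF DERIV_ident DERIV_const]]])
      unfolding A_def[symmetric] C_def[symmetric] e1 pA using pos
      by (simp_all add: field_simps power2_eq_square)
    have 1: "1 - C / A = p / A" using pos AC[symmetric] by (simp add: field_simps)
    show "(t - q) / (t - 1) * (eC - eA) = - ((1 - (t - q) / (t - 1)) * - eA)"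
      unfolding A_def[symmetric] C_def[symmetric] 1 e1 using pos
      by (simp add: eA_def field_simps power2_eq_square)
    show "0 < (t - q) / (t - 1)" "(t - q) / (t - 1) < 1"
      unfolding A_def[symmetric] C_def[symmetric] using pos AC by (auto simp: field_simps)
    show "ln ((t - q) / (t - 1)) = lC - lA"
      unfolding A_def[symmetric] C_def[symmetric] using pos by (simp add: ln_div lA_def lC_def)
    show "ln (1 - (t - q) / (t - 1)) = lp - lA"
      unfolding A_def[symmetric] C_def[symmetric] 1 using pos by (simp add: ln_div lp_def lA_def)
  qed
  have "((\<lambda>x. rogersL (x / (x - 1)\<^sup>2) - rogersL ((x - 1) / (q * x - 1))
           - rogersL (q * (x - 1) / (q * x - 1))
           + rogersL ((x - q) / (q * (x - 1))) + rogersL ((x - q) / (x - 1)))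
       has_real_derivative
     ((lt - 2*lA) * (eC + eB - 2*eA) - (lC + lB - 2*lp - 2*lA) * (et - 2*eA)) / 2
     - ((lA - lB) * (et - eB) - (lp + lt - lB) * (eA - eB)) / 2
     - ((2 * lp + lA - lB) * (- eB) - (lp - lB) * (eA - eB)) / 2
     + ((lC - 2 * lp - lA) * (et - eA) - (lt - lp - lA) * (eC - eA)) / 2
     + ((lC - lA) * (- eA) - (lp - lA) * (eC - eA)) / 2) (at t)"
    by (intro DERIV_add DERIV_diff z u1 v1 u0 v0)
  hence "((\<lambda>x. rogersL (x / (x - 1)\<^sup>2) - rogersL ((x - 1) / (q * x - 1))
           - rogersL (q * (x - 1) / (q * x - 1))
           + rogersL ((x - q) / (q * (x - 1))) + rogersL ((x - q) / (x - 1)))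
       has_real_derivative 0) (at t)"
    by (rule DERIV_cong) (simp add: field_simps)
  thus ?thesis unfolding q_def .
qed



definition qq :: real where "qq = gold + 1"

lemma qq_facts: "gold * gold = gold + 1" "qq = gold * gold" "qq > 1" "gold > 1" "qq * qq = 3 * qq - 1"
proof -
  show g: "gold * gold = gold + 1" using gold_sq by (simp add: power2_eq_square)
  thus "qq = gold * gold" by (simp add: qq_def)
  show "gold > 1" by (rule gold_gt1)
  thus "qq > 1" by (simp add: qq_def)
  show "qq * qq = 3 * qq - 1" unfolding qq_def using g by (simp add: algebra_simps)
qed

lemma ranges:
  assumes x: "x \<ge> qq"
  shows "x / (x - 1)\<^sup>2 \<in> {0..1}" "(x - 1) / (qq * x - 1) \<in> {0..1}"
    "qq * (x - 1) / (qq * x - 1) \<in> {0..1}" "(x - qq) / (qq * (x - 1)) \<in> {0..1}"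
    "(x - qq) / (x - 1) \<in> {0..1}"
proof -
  have q: "qq > 1" "qq * qq = 3 * qq - 1" using qq_facts by auto
  have x1: "x > 1" using x q by simp
  have qx: "qq * x > 1 * 1" using q x1 by (intro mult_strict_mono) auto
  have "(x - 1) * (x - 1) - x = (x - qq) * (qq * x - 1) / qq"
    using q by (simp add: field_simps) algebra
  moreover have "(x - qq) * (qq * x - 1) / qq \<ge> 0" using x qx q by simp
  ultimately have "x \<le> (x - 1)\<^sup>2" by (simp add: power2_eq_square)
  thus "x / (x - 1)\<^sup>2 \<in> {0..1}" using x1 by auto
  have "x - 1 \<le> qq * x - 1" using q x1 by simp
  thus "(x - 1) / (qq * x - 1) \<in> {0..1}" using x1 qx by auto
  have "qq * (x - 1) \<le> qq * x - 1" using q by (simp add: algebra_simps)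
  thus "qq * (x - 1) / (qq * x - 1) \<in> {0..1}" using x1 qx q by auto
  have "x - qq \<le> qq * (x - 1)" using q x1 by (simp add: algebra_simps)
  thus "(x - qq) / (qq * (x - 1)) \<in> {0..1}" using x x1 q by auto
  have "x - qq \<le> x - 1" using q by simp
  thus "(x - qq) / (x - 1) \<in> {0..1}" using x x1 by auto
qed

lemma main_id:
  assumes s: "s \<ge> qq"
  shows "rogersL (s / (s - 1)\<^sup>2) - rogersL ((s - 1) / (qq * s - 1))
           - rogersL (qq * (s - 1) / (qq * s - 1))
           + rogersL ((s - qq) / (qq * (s - 1))) + rogersL ((s - qq) / (s - 1)) = 0"
proof -
  let ?F = "\<lambda>x. rogersL (x / (x - 1)\<^sup>2) - rogersL ((x - 1) / (qq * x - 1))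
           - rogersL (qq * (x - 1) / (qq * x - 1))
           + rogersL ((x - qq) / (qq * (x - 1))) + rogersL ((x - qq) / (x - 1))"
  have q: "qq > 1" "qq * qq = 3 * qq - 1" "qq = gold * gold" "gold > 1" "gold * gold = gold + 1"
    using qq_facts by auto
  have "?F s = ?F qq"
  proof (rule const_on[where F="?F"])
    show "continuous_on {qq..s} ?F"
    proof -
      have nz: "x - 1 \<noteq> 0 \<and> qq * x - 1 \<noteq> 0 \<and> qq * (x - 1) \<noteq> 0 \<and> (x - 1)\<^sup>2 \<noteq> 0" if "x \<in> {qq..s}" for x
      proof -
        have x: "x \<ge> qq" using that by auto
        have "x > 1" using x q by simp
        moreover have "qq * x > 1 * 1" using q \<open>x > 1\<close> by (intro mult_strict_mono) auto
        ultimately show ?thesis using q by auto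
      qed
      have r: "(\<lambda>x. x / (x - 1)\<^sup>2) ` {qq..s} \<subseteq> {0..1}"
        "(\<lambda>x. (x - 1) / (qq * x - 1)) ` {qq..s} \<subseteq> {0..1}"
        "(\<lambda>x. qq * (x - 1) / (qq * x - 1)) ` {qq..s} \<subseteq> {0..1}"
        "(\<lambda>x. (x - qq) / (qq * (x - 1))) ` {qq..s} \<subseteq> {0..1}"
        "(\<lambda>x. (x - qq) / (x - 1)) ` {qq..s} \<subseteq> {0..1}"
        by (intro image_subsetI ranges; simp)+
      show ?thesis
        by (intro continuous_intros L_cont_comp r) (use nz in auto)
    qed
    fix t assume t: "qq < t" "t < s"
    have "t > gold + 1" using t by (simp add: qq_def)
    from main_deriv[OF q(5) q(4) this] show "(?F has_real_derivative 0) (at t)"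
      by (simp add: qq_def)
  qed (use s in auto)
  also have "?F qq = 0"
  proof -
    have g: "gold > 0" "qq - 1 = gold" using q by (auto simp: qq_def)
    have z: "qq / (qq - 1)\<^sup>2 = 1" unfolding g(2) using q g by (simp add: power2_eq_square)
    have qq1: "qq * qq - 1 = gold * (qq + 1)" using q by (simp add: qq_def algebra_simps)
    have u: "(qq - 1) / (qq * qq - 1) = 1 / (qq + 1)" unfolding qq1 g(2) using g q by simp
    have v1: "qq * gold / (gold * (qq + 1)) = qq / (qq + 1)" using g by simp
    have v2: "1 - 1 / (qq + 1) = qq / (qq + 1)" using q by (simp add: field_simps)
    have v: "qq * (qq - 1) / (qq * qq - 1) = 1 - 1 / (qq + 1)"
      unfolding qq1 g(2) v1 v2 ..
    have "rogersL (1 / (qq + 1)) + rogersL (1 - 1 / (qq + 1)) = pi\<^sup>2 / 6"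
      using q by (intro L_reflect) auto
    thus ?thesis unfolding z u v by (simp add: L_zero L_one)
  qed
  finally show ?thesis .
qed



definition HH :: "real \<Rightarrow> real" where
  "HH x = rogersL ((x - qq) / (qq * (x - 1))) + rogersL ((x - qq) / (x - 1))"

lemma T_tel:
  assumes x: "x \<ge> qq"
  shows "rogersL (x / (x - 1)\<^sup>2) = HH (qq * x) - HH x"
proof -
  have q: "qq > 1" using qq_facts by auto
  have x1: "x > 1" using x q by simp
  have qx: "qq * x > 1 * 1" using q x1 by (intro mult_strict_mono) auto
  have a: "(qq * x - qq) / (qq * (qq * x - 1)) = (x - 1) / (qq * x - 1)"
    using q qx by (simp add: field_simps)
  have b: "(qq * x - qq) / (qq * x - 1) = qq * (x - 1) / (qq * x - 1)"
    by (simp add: algebra_simps)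
  show ?thesis using main_id[OF x] unfolding HH_def a b by simp
qed

definition psi :: real where "psi = (1 - sqrt 5) / 2"

lemma psi_facts: "psi * psi = psi + 1" "psi = - (1 / gold)"
proof -
  show "psi * psi = psi + 1" by (simp add: psi_def field_simps)
  have "gold * psi = -1" by (simp add: psi_def gold_def field_simps)
  moreover have "gold > 0" using gold_gt1 by simp
  ultimately show "psi = - (1 / gold)" by (simp add: field_simps)
qed

lemma fib_binet: "real (fibo n) = (gold ^ n - psi ^ n) / sqrt 5"
proof (induction n rule: fibo.induct)
  case 1 then show ?case by simp
next
  case 2 then show ?case by (simp add: gold_def psi_def field_simps)
next
  case (3 n)
  have "gold ^ Suc (Suc n) = (gold * gold) * gold ^ n" by simp
  hence g: "gold ^ Suc (Suc n) = gold ^ Suc n + gold ^ n"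
    unfolding qq_facts(1) by (simp add: algebra_simps)
  have "psi ^ Suc (Suc n) = (psi * psi) * psi ^ n" by simp
  hence p: "psi ^ Suc (Suc n) = psi ^ Suc n + psi ^ n"
    unfolding psi_facts(1) by (simp add: algebra_simps)
  have "real (fibo (Suc (Suc n))) = real (fibo (Suc n)) + real (fibo n)" by simp
  also have "\<dots> = (gold ^ Suc n - psi ^ Suc n) / sqrt 5 + (gold ^ n - psi ^ n) / sqrt 5"
    using 3 by simp
  also have "\<dots> = ((gold ^ Suc n + gold ^ n) - (psi ^ Suc n + psi ^ n)) / sqrt 5"
    by (simp add: field_simps)
  also have "\<dots> = (gold ^ Suc (Suc n) - psi ^ Suc (Suc n)) / sqrt 5" by (simp only: g p)
  finally show ?case .
qed

lemma luc_binet: "real (lucas n) = gold ^ n + psi ^ n"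
proof (induction n rule: lucas.induct)
  case 1 then show ?case by simp
next
  case 2 then show ?case by (simp add: gold_def psi_def field_simps)
next
  case (3 n)
  have "gold ^ Suc (Suc n) = (gold * gold) * gold ^ n" by simp
  hence g: "gold ^ Suc (Suc n) = gold ^ Suc n + gold ^ n"
    unfolding qq_facts(1) by (simp add: algebra_simps)
  have "psi ^ Suc (Suc n) = (psi * psi) * psi ^ n" by simp
  hence p: "psi ^ Suc (Suc n) = psi ^ Suc n + psi ^ n"
    unfolding psi_facts(1) by (simp add: algebra_simps)
  have "real (lucas (Suc (Suc n))) = real (lucas (Suc n)) + real (lucas n)" by simp
  also have "\<dots> = (gold ^ Suc n + psi ^ Suc n) + (gold ^ n + psi ^ n)"
    using 3 by simp
  also have "\<dots> = (gold ^ Suc n + gold ^ n) + (psi ^ Suc n + psi ^ n)"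
    by (simp add: algebra_simps)
  also have "\<dots> = gold ^ Suc (Suc n) + psi ^ Suc (Suc n)" by (simp only: g p)
  finally show ?case .
qed

lemma y_form:
  fixes y :: real
  assumes "y > 1"
  shows "1 / (y - 1 / y)\<^sup>2 = y\<^sup>2 / (y\<^sup>2 - 1)\<^sup>2"
proof -
  have "y \<noteq> 0" using assms by simp
  hence "y - 1 / y = (y\<^sup>2 - 1) / y" by (simp add: field_simps power2_eq_square)
  thus ?thesis using assms by (simp add: power_divide)
qed

lemma term_even:
  assumes "even m" "m \<ge> 1"
  shows "1 / (5 * (real (fibo m))\<^sup>2) = qq ^ m / (qq ^ m - 1)\<^sup>2"
proof -
  define y where "y = gold ^ m"
  have y1: "y > 1" unfolding y_def using gold_gt1 assms by (simp add: one_less_power)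
  have "psi ^ m = 1 / y" unfolding psi_facts(2) y_def using assms
    by (simp add: power_minus_even power_divide)
  hence "5 * (real (fibo m))\<^sup>2 = (y - 1 / y)\<^sup>2"
    unfolding fib_binet y_def[symmetric] by (simp add: power_divide)
  moreover have "qq ^ m = y\<^sup>2" unfolding y_def qq_facts(2)
    by (simp add: power_mult_distrib power2_eq_square)
  ultimately show ?thesis using y_form[OF y1] by simp
qed

lemma term_odd:
  assumes "odd m"
  shows "1 / (real (lucas m))\<^sup>2 = qq ^ m / (qq ^ m - 1)\<^sup>2"
proof -
  define y where "y = gold ^ m"
  have "m \<ge> 1" using assms by (cases m) auto
  hence y1: "y > 1" unfolding y_def using gold_gt1 by (simp add: one_less_power)
  have "psi ^ m = - (1 / y)" unfolding psi_facts(2) y_def using assms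
    by (simp add: power_minus_odd power_divide)
  hence "real (lucas m) = y - 1 / y"
    unfolding luc_binet y_def[symmetric] by simp
  moreover have "qq ^ m = y\<^sup>2" unfolding y_def qq_facts(2)
    by (simp add: power_mult_distrib power2_eq_square)
  ultimately show ?thesis using y_form[OF y1] by simp
qed


lemma X_ge: "qq ^ (2 * k + 2) \<ge> qq"
proof -
  have "qq ^ 1 \<le> qq ^ (2 * k + 2)" using qq_facts by (intro power_increasing) auto
  thus ?thesis by simp
qed

lemma HH_lim: "(\<lambda>k. HH (qq ^ (2 * k + 2))) \<longlonglongrightarrow> rogersL (1 / qq) + rogersL 1"
proof -
  have q: "qq > 1" using qq_facts by auto
  define w where "w k = (1 / qq)\<^sup>2 * ((1 / qq)\<^sup>2) ^ k" for k
  have w0: "w \<longlonglongrightarrow> 0"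
  proof -
    have "((1 / qq)\<^sup>2) < 1" using q by (simp add: power_less_one_iff power_divide)
    hence "(\<lambda>k. ((1 / qq)\<^sup>2) ^ k) \<longlonglongrightarrow> 0" by (intro LIMSEQ_power_zero) auto
    thus ?thesis unfolding w_def by (intro tendsto_mult_right_zero)
  qed
  have wX: "w k = 1 / qq ^ (2 * k + 2)" for k
  proof -
    have "(1 / qq) ^ (2 * k + 2) = ((1 / qq)\<^sup>2) ^ k * (1 / qq)\<^sup>2"
      by (simp only: power_add power_mult)
    thus ?thesis unfolding w_def power_one_over[symmetric] by (simp only: mult.commute)
  qed
  have e1: "(qq ^ (2 * k + 2) - qq) / (qq ^ (2 * k + 2) - 1) = (1 - qq * w k) / (1 - w k)" for k
  proof -
    define X where "X = qq ^ (2 * k + 2)"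
    have "X \<ge> qq" unfolding X_def by (rule X_ge)
    hence "X \<noteq> 0" "X - 1 \<noteq> 0" using q by auto
    thus ?thesis unfolding wX X_def[symmetric] by (simp add: field_simps)
  qed
  have e2: "(qq ^ (2 * k + 2) - qq) / (qq * (qq ^ (2 * k + 2) - 1)) = (1 - qq * w k) / (qq * (1 - w k))" for k
  proof -
    define X where "X = qq ^ (2 * k + 2)"
    have "X \<ge> qq" unfolding X_def by (rule X_ge)
    hence "X \<noteq> 0" "X - 1 \<noteq> 0" using q by auto
    thus ?thesis unfolding wX X_def[symmetric] using q by (simp add: field_simps)
  qed
  have l1: "(\<lambda>k. (qq ^ (2 * k + 2) - qq) / (qq ^ (2 * k + 2) - 1)) \<longlonglongrightarrow> 1"
  proof -
    have "(\<lambda>k. (1 - qq * w k) / (1 - w k)) \<longlonglongrightarrow> (1 - qq * 0) / (1 - 0)"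
      by (intro tendsto_intros w0) auto
    thus ?thesis unfolding e1 by simp
  qed
  have l2: "(\<lambda>k. (qq ^ (2 * k + 2) - qq) / (qq * (qq ^ (2 * k + 2) - 1))) \<longlonglongrightarrow> 1 / qq"
  proof -
    have "(\<lambda>k. (1 - qq * w k) / (qq * (1 - w k))) \<longlonglongrightarrow> (1 - qq * 0) / (qq * (1 - 0))"
      using q by (intro tendsto_intros w0) auto
    thus ?thesis unfolding e2 by simp
  qed
  have c1: "(\<lambda>k. rogersL ((qq ^ (2 * k + 2) - qq) / (qq * (qq ^ (2 * k + 2) - 1)))) \<longlonglongrightarrow> rogersL (1 / qq)"
    by (rule continuous_on_tendsto_compose[OF L_cont l2])
       (use q ranges(4)[OF X_ge] in auto)
  have c2: "(\<lambda>k. rogersL ((qq ^ (2 * k + 2) - qq) / (qq ^ (2 * k + 2) - 1))) \<longlonglongrightarrow> rogersL 1"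
    by (rule continuous_on_tendsto_compose[OF L_cont l1])
       (use q ranges(5)[OF X_ge] in auto)
  show ?thesis unfolding HH_def by (intro tendsto_add c1 c2)
qed

lemma HH0: "HH (qq ^ 2) = pi\<^sup>2 / 6"
proof -
  have q: "qq > 1" using qq_facts by auto
  have a: "(qq ^ 2 - qq) / (qq * (qq ^ 2 - 1)) = 1 / (qq + 1)"
  proof -
    have e: "qq ^ 2 - qq = qq * (qq - 1)" "qq ^ 2 - 1 = (qq - 1) * (qq + 1)"
      by (simp_all add: power2_eq_square algebra_simps)
    have "qq * qq > 1 * 1" using q by (intro mult_strict_mono) auto
    hence "qq \<noteq> 0" "qq - 1 \<noteq> 0" "qq + 1 \<noteq> 0" "qq * qq \<noteq> 1" using q by auto
    thus ?thesis unfolding e by (simp add: field_simps)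
  qed
  have b: "(qq ^ 2 - qq) / (qq ^ 2 - 1) = 1 - 1 / (qq + 1)"
  proof -
    have "qq ^ 2 - qq = qq * (qq - 1)" "qq ^ 2 - 1 = (qq - 1) * (qq + 1)"
      by (simp_all add: power2_eq_square algebra_simps)
    moreover have "qq * qq > 1 * 1" using q by (intro mult_strict_mono) auto
    hence "qq \<noteq> 0" "qq - 1 \<noteq> 0" "qq + 1 \<noteq> 0" "qq * qq \<noteq> 1" using q by auto
    ultimately have "(qq ^ 2 - qq) / (qq ^ 2 - 1) = qq / (qq + 1)" by (simp add: field_simps)
    also have "\<dots> = 1 - 1 / (qq + 1)" using q by (simp add: field_simps)
    finally show ?thesis .
  qed
  show ?thesis unfolding HH_def a b using q by (intro L_reflect) auto
qed

theorem mainTheorem6: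
  shows "(\<lambda>k. rogersL (1 / (5 * (real (fibo (2 * (k + 1))))\<^sup>2))
              + rogersL (1 / (real (lucas (2 * (k + 1) + 1)))\<^sup>2))
         sums (pi\<^sup>2 / 15)"
proof -
  define G where "G k = HH (qq ^ (2 * k + 2))" for k
  have eq: "rogersL (1 / (5 * (real (fibo (2 * (k + 1))))\<^sup>2))
              + rogersL (1 / (real (lucas (2 * (k + 1) + 1)))\<^sup>2) = G (Suc k) - G k" for k
  proof -
    have m1: "2 * (k + 1) = 2 * k + 2" "2 * k + 2 + 1 = 2 * k + 3" by simp_all
    have t1: "1 / (5 * (real (fibo (2 * k + 2)))\<^sup>2) = qq ^ (2 * k + 2) / (qq ^ (2 * k + 2) - 1)\<^sup>2"
      by (rule term_even) auto
    have t2: "1 / (real (lucas (2 * k + 3)))\<^sup>2 = qq ^ (2 * k + 3) / (qq ^ (2 * k + 3) - 1)\<^sup>2"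
      by (rule term_odd) auto
    have "qq ^ (2 * k + 2) \<le> qq ^ (2 * k + 3)" using qq_facts by (intro power_increasing) auto
    hence X3: "qq ^ (2 * k + 3) \<ge> qq" using X_ge[of k] by linarith
    have sk: "Suc (2 * k + 2) = 2 * k + 3" "Suc (2 * k + 3) = 2 * Suc k + 2" by simp_all
    have p3: "qq * qq ^ (2 * k + 2) = qq ^ (2 * k + 3)" "qq * qq ^ (2 * k + 3) = qq ^ (2 * Suc k + 2)"
      by (metis power_Suc sk(1), metis power_Suc sk(2))
    show ?thesis unfolding m1 t1 t2 T_tel[OF X_ge[of k]] T_tel[OF X3] p3 G_def by simp
  qed
  have "(\<lambda>k. G (Suc k) - G k) sums (rogersL (1 / qq) + rogersL 1 - G 0)"
    by (rule telescope_sums) (use HH_lim in \<open>simp add: G_def\<close>)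
  moreover have "rogersL (1 / qq) + rogersL 1 - G 0 = pi\<^sup>2 / 15"
  proof -
    have "G 0 = HH (qq ^ 2)" by (simp add: G_def power2_eq_square)
    thus ?thesis using HH0 L_gold[folded qq_def] by (simp add: L_one)
  qed
  ultimately show ?thesis unfolding eq by simp
qed


end
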